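(* Let $\alpha\in\mathbb{R}\setminus\{0\}$, $\vartheta\in(0,\pi)$, and let $k>0$ with $k\notin\mathbb{N}$. Put $g(k)=\cos k\pi+\frac{\alpha}{4k}\sin k\pi$ and assume $|g(k)|\ge1$. Define $$f(k)=-\cos k\pi+\frac{\sin^2 k\pi}{\frac{\alpha}{4k}\sin k\pi\pm\sqrt{g(k)^2-1}},$$ where the sign $\pm$ is the sign of $g(k)$. Then: (a) The equation $\cos k\vartheta=f(k)$ (the eigenvalue condition for $H^+$) holds if and only if $$\frac{\alpha}{2k}(1+\cos k\vartheta\cos k\pi)(\cos k\vartheta+\cos k\pi)=\sin k\pi\,(1+2\cos k\vartheta\cos k\pi+\cos^2 k\vartheta).$$ (b) The equation $-\cos k\vartheta=f(k)$ (the eigenvalue condition for $H^-$) holds if and only if $$\frac{\alpha}{2k}(1-\cos k\vartheta\cos k\pi)(-\cos k\vartheta+\cos k\pi)=\sin k\pi\,(1-2\cos k\vartheta\cos k\pi+\cos^2 k\vartheta).$$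
   Context: For non-integer $k>0$ with $|g(k)|\ge1$, the number $k^2$ is an eigenvalue of the even (resp. odd) part $H^+$ (resp. $H^-$) of the bent chain Hamiltonian if and only if $\cos k\vartheta=f(k)$ (resp. $-\cos k\vartheta=f(k)$). Here the bent chain is a chain of rings of circumference $2\pi$ coupled by $\delta$-couplings of strength $\alpha$ at the touching points, with one ring split into arcs of lengths $\pi\pm\vartheta$. The claim is a purely analytic equivalence of the two displayed equations. *)

theory Defs
  imports "HOL-Analysis.Analysis"
begin

definition g_fun :: "real \<Rightarrow> real \<Rightarrow> real" where
  "g_fun \<alpha> k = cos (k * pi) + \<alpha> / (4 * k) * sin (k * pi)"

definition f_fun :: "real \<Rightarrow> real \<Rightarrow> real" where
  "f_fun \<alpha> k = - cos (k * pi) + (sin (k * pi))^2 /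
      (\<alpha> / (4 * k) * sin (k * pi) + sgn (g_fun \<alpha> k) * sqrt ((g_fun \<alpha> k)^2 - 1))"

end

theory Submission
  imports Defs
begin

lemma core:
  fixes c s b x :: real
  assumes s0: "s \<noteq> 0" and cs: "c^2 + s^2 = 1" and x1: "\<bar>x\<bar> \<le> 1"
    and g1: "\<bar>c + b * s\<bar> \<ge> 1"
  shows "x = - c + s^2 / (b * s + sgn (c + b * s) * sqrt ((c + b * s)^2 - 1))
     \<longleftrightarrow> 2 * b * (1 + x * c) * (x + c) = s * (1 + 2 * x * c + x^2)"
proof -
  define g where "g = c + b * s"
  define r where "r = sqrt (g^2 - 1)"
  define \<sigma> where "\<sigma> = sgn g"
  define l where "l = g + \<sigma> * r"
  have g21: "1 \<le> g^2"
  proof -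
    have "\<bar>1::real\<bar> \<le> \<bar>g\<bar>" using g1 g_def by simp
    hence "(1::real)^2 \<le> g^2" by (simp only: abs_le_square_iff)
    thus ?thesis by simp
  qed
  have r0: "r \<ge> 0" unfolding r_def using g21 by simp
  have r2: "r^2 = g^2 - 1" unfolding r_def using g21 by simp
  have gne: "g \<noteq> 0" using g1 g_def by auto
  have sig2: "\<sigma>^2 = 1" unfolding \<sigma>_def using gne by (cases "g > 0") auto
  have sigg: "\<sigma> * g = \<bar>g\<bar>" unfolding \<sigma>_def by (simp add: sgn_mult_abs abs_sgn)
  have quad: "l^2 - 2*g*l + 1 = 0"
    unfolding l_def using sig2 r2 by (simp add: power2_eq_square algebra_simps) (metis mult.assoc mult_1)
  have lbig: "\<bar>l\<bar> \<ge> 1"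
  proof -
    have "\<sigma> * l = \<bar>g\<bar> + r" unfolding l_def using sig2 sigg
      by (simp add: algebra_simps power2_eq_square)
    moreover have "\<bar>\<sigma>\<bar> = 1" using sig2 by (simp add: power2_eq_1_iff) (metis abs_neg_one abs_one power2_eq_1_iff sig2)
    ultimately have "\<bar>l\<bar> = \<bar>g\<bar> + r" by (metis abs_mult mult_1 abs_of_nonneg r0 abs_ge_zero add_nonneg_nonneg)
    thus ?thesis using g1 g_def r0 by simp
  qed
  have D: "b * s + sgn (c + b * s) * sqrt ((c + b * s)^2 - 1) = l - c"
    unfolding l_def \<sigma>_def r_def g_def by simp
  have c2: "c^2 < 1" using cs s0 by (smt (verit) zero_less_power2)
  have lc: "l - c \<noteq> 0"
  proof
    assume "l - c = 0"
    hence "\<bar>c\<bar> \<ge> 1" using lbig by simp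
    hence "c^2 \<ge> 1" by (metis abs_le_square_iff one_power2 abs_one)
    thus False using c2 by simp
  qed
  have key: "(1 + x*c)^2 + (x+c)^2 - 2*c*(x+c)*(1+x*c) = s^2 * (1 + 2*x*c + x^2)"
  proof -
    have s2: "s^2 = 1 - c^2" using cs by simp
    show ?thesis unfolding s2 by (simp add: power2_eq_square algebra_simps)
  qed
  show ?thesis unfolding D
  proof
    assume h: "x = - c + s^2 / (l - c)"
    hence "(x + c) * (l - c) = s^2" using lc by (simp add: field_simps)
    hence e: "(x + c) * l = 1 + x*c" using cs by algebra
    have "2 * (b * s) * (x + c)^2 * l = (x + c)^2 * (l^2 + 1) - 2 * c * (x + c) * ((x + c) * l)"
      using quad g_def by algebra
    also have "\<dots> = s^2 * (1 + 2*x*c + x^2)" using e key by algebra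
    finally have "s * (2*b*(1+x*c)*(x+c)) = s * (s * (1 + 2*x*c + x^2))"
      using e by algebra
    thus "2 * b * (1 + x * c) * (x + c) = s * (1 + 2 * x * c + x^2)" using s0 by simp
  next
    assume h: "2 * b * (1 + x * c) * (x + c) = s * (1 + 2 * x * c + x^2)"
    have u: "x + c \<noteq> 0"
    proof
      assume "x + c = 0"
      hence "x = -c" by simp
      with h have "s * (1 - c^2) = 0" by (simp add: power2_eq_square algebra_simps)
      thus False using s0 c2 by simp
    qed
    define m where "m = (1 + x*c) / (x + c)"
    have me: "m * (x + c) = 1 + x*c" unfolding m_def using u by simp
    have "(x+c)^2 * (m^2 - 2*g*m + 1) = (1+x*c)^2 + (x+c)^2 - 2 * (c + b * s) * (x + c) * (1 + x * c)"
      using me g_def by algebra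
    also have "\<dots> = 0" using key h by algebra
    finally have mq: "m^2 - 2*g*m + 1 = 0" using u by simp
    have mbig: "\<bar>m\<bar> \<ge> 1"
    proof -
      have "(1+x*c)^2 - (x+c)^2 = (1-x^2)*(1-c^2)" by (simp add: power2_eq_square algebra_simps)
      moreover have "x^2 \<le> 1" using x1 by (simp add: abs_le_square_iff abs_square_le_1)
      ultimately have "(x+c)^2 \<le> (1+x*c)^2" using c2 by (smt (verit) mult_nonneg_nonneg)
      hence "\<bar>x+c\<bar> \<le> \<bar>1+x*c\<bar>" by (simp add: abs_le_square_iff)
      thus ?thesis unfolding m_def using u by (simp add: abs_divide)
    qed
    have "(l - m) * (l + m - 2*g) = 0" using quad mq by algebra
    hence lm: "l = m"
    proof (cases "l = m")
      case False
      assume "(l - m) * (l + m - 2*g) = 0"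
      hence mm: "m = 2*g - l" using False by simp
      hence "l * m = 1" using quad by algebra
      hence "\<bar>l\<bar> * \<bar>m\<bar> = 1" by (metis abs_mult abs_one)
      hence "\<bar>l\<bar> = 1 \<and> \<bar>m\<bar> = 1" using lbig mbig
        by (smt (verit) mult_le_cancel_left1 mult_le_cancel_right1)
      hence "l^2 = 1" by (metis abs_mult_self_eq one_power2 power2_eq_square)
      thus ?thesis using \<open>l * m = 1\<close> by (simp add: power2_eq_square) (metis mult.left_commute mult_1_right \<open>l*m=1\<close>)
    qed simp
    have "(x + c) * (l - c) = s^2" using me lm cs by algebra
    thus "x = - c + s^2 / (l - c)" using lc by (simp add: field_simps)
  qed
qed

theorem proposition4p1:
  fixes \<alpha> \<theta> k :: real
  assumes "\<alpha> \<noteq> 0" and "0 < \<theta>" and "\<theta> < pi"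
    and "0 < k" and "k \<notin> \<nat>"
    and "\<bar>g_fun \<alpha> k\<bar> \<ge> 1"
  shows "(cos (k * \<theta>) = f_fun \<alpha> k \<longleftrightarrow>
           \<alpha> / (2 * k) * (1 + cos (k * \<theta>) * cos (k * pi)) * (cos (k * \<theta>) + cos (k * pi))
           = sin (k * pi) * (1 + 2 * cos (k * \<theta>) * cos (k * pi) + (cos (k * \<theta>))^2))
       \<and> (- cos (k * \<theta>) = f_fun \<alpha> k \<longleftrightarrow>
           \<alpha> / (2 * k) * (1 - cos (k * \<theta>) * cos (k * pi)) * (- cos (k * \<theta>) + cos (k * pi))
           = sin (k * pi) * (1 - 2 * cos (k * \<theta>) * cos (k * pi) + (cos (k * \<theta>))^2))"
proof -
  have s0: "sin (k * pi) \<noteq> 0"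
  proof
    assume "sin (k * pi) = 0"
    then obtain i :: int where "k * pi = of_int i * pi" by (auto simp: sin_zero_iff_int2)
    hence ki: "k = of_int i" by simp
    hence "i \<ge> 0" using assms(4) by simp
    hence "k = of_nat (nat i)" using ki by simp
    thus False using assms(5) by (metis of_nat_in_Nats)
  qed
  have cs: "(cos (k * pi))^2 + (sin (k * pi))^2 = 1" by simp
  have hb: "2 * (\<alpha> / (4 * k)) = \<alpha> / (2 * k)" by simp
  have g1: "\<bar>cos (k * pi) + \<alpha> / (4 * k) * sin (k * pi)\<bar> \<ge> 1" using assms(6) by (simp add: g_fun_def)
  have fe: "f_fun \<alpha> k = - cos (k * pi) + (sin (k * pi))^2 /
      (\<alpha> / (4 * k) * sin (k * pi) + sgn (cos (k * pi) + \<alpha> / (4 * k) * sin (k * pi)) *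
        sqrt ((cos (k * pi) + \<alpha> / (4 * k) * sin (k * pi))^2 - 1))"
    by (simp add: f_fun_def g_fun_def)
  have abs1: "\<bar>cos (k * \<theta>)\<bar> \<le> 1" by simp
  have abs2: "\<bar>- cos (k * \<theta>)\<bar> \<le> 1" by simp
  note A = core[OF s0 cs abs1 g1]
  note B = core[OF s0 cs abs2 g1]
  have e1: "\<And>P Q. 2 * (\<alpha> / (4 * k)) * P * Q = \<alpha> / (2 * k) * P * Q" by simp
  show ?thesis
  proof
    show "(cos (k * \<theta>) = f_fun \<alpha> k \<longleftrightarrow>
           \<alpha> / (2 * k) * (1 + cos (k * \<theta>) * cos (k * pi)) * (cos (k * \<theta>) + cos (k * pi))
           = sin (k * pi) * (1 + 2 * cos (k * \<theta>) * cos (k * pi) + (cos (k * \<theta>))^2))"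
      unfolding fe A e1 ..
    have "(- cos (k * \<theta>))^2 = (cos (k * \<theta>))^2" by simp
    then show "(- cos (k * \<theta>) = f_fun \<alpha> k \<longleftrightarrow>
           \<alpha> / (2 * k) * (1 - cos (k * \<theta>) * cos (k * pi)) * (- cos (k * \<theta>) + cos (k * pi))
           = sin (k * pi) * (1 - 2 * cos (k * \<theta>) * cos (k * pi) + (cos (k * \<theta>))^2))"
      unfolding fe B e1 by simp
  qed
qed

end
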